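(* With the order on $\widehat{\mathbb{R}^{\mathcal{D}_0}}$ defined in the context, $\widehat{\mathbb{R}^{\mathcal{D}_0}}$ is a totally ordered field, and for $a\in\widehat{\mathbb{R}^{\mathcal{D}_0}}$ we have $a\ge0$ if and only if $a=b^2$ for some $b\in\widehat{\mathbb{R}^{\mathcal{D}_0}}$. Consequently the map $|\cdot|:\widehat{\mathbb{C}^{\mathcal{D}_0}}\to\widehat{\mathbb{R}^{\mathcal{D}_0}}$, $|a+ib|=\sqrt{a^2+b^2}$ ($a,b\in\widehat{\mathbb{R}^{\mathcal{D}_0}}$), is an absolute value on $\widehat{\mathbb{C}^{\mathcal{D}_0}}$.
   Context: Fix $d\in\mathbb{N}$, $\mathcal{D}_0=\mathcal{D}(\mathbb{R}^d)$. For $\varphi\in\mathcal{D}_0$ let $R_\varphi=\sup\{\|x\|:\varphi(x)\neq0\}$ if $\varphi\neq0$, $R_0=1$. For $n\in\mathbb{N}$, $\mathcal{D}_n$ is the set of $\varphi\in\mathcal{D}_0$ that are real-valued, even, with $R_\varphi\le1/n$, $\int\varphi=1$, $\int x^\alpha\varphi(x)dx=0$ for $1\le|\alpha|\le n$, $\int|\varphi|\le1+1/n$, and $\sup_x|\partial^\alpha\varphi(x)|\le R_\varphi^{-2(|\alpha|+d)}$ for $|\alpha|\le n$. $\mathcal{U}$ is a fixed free ultrafilter on $\mathcal{D}_0$ containing every $\mathcal{D}_n$ (and $\mathfrak c^+$-good, $\mathfrak c=\mathrm{card}\,\mathbb{R}$). "$P(\varphi)$ a.e." means $\{\varphi:P(\varphi)\}\in\mathcal{U}$.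 $\mathcal{M}(\mathbb{C}^{\mathcal{D}_0})$: nets $(A_\varphi)\in\mathbb{C}^{\mathcal{D}_0}$ with $|A_\varphi|\le R_\varphi^{-m}$ a.e. for some $m\in\mathbb{N}$; $\mathcal{N}(\mathbb{C}^{\mathcal{D}_0})$: nets with $|A_\varphi|<R_\varphi^p$ a.e. for all $p\in\mathbb{N}$. $\widehat{\mathbb{C}^{\mathcal{D}_0}}=\mathcal{M}/\mathcal{N}$ (pointwise operations), $\widehat{A_\varphi}$ the class, $\widehat{\mathbb{R}^{\mathcal{D}_0}}$ the classes of real-valued moderate nets. Order: a nonzero $\widehat{A_\varphi}\in\widehat{\mathbb{R}^{\mathcal{D}_0}}$ satisfies $\widehat{A_\varphi}>0$ iff $A_\varphi>0$ a.e. *)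

theory Defs
  imports "HOL-Analysis.Analysis" "HOL-Algebra.Ring"
begin

type_synonym 'n test = "real ^ 'n \<Rightarrow> complex"
type_synonym 'n net = "'n test \<Rightarrow> complex"

definition pd :: "'n::finite \<Rightarrow> 'n test \<Rightarrow> 'n test" where
  "pd i f = (\<lambda>x. vector_derivative (\<lambda>t. f (x + t *\<^sub>R axis i 1)) (at 0))"

fun dlist :: "'n::finite list \<Rightarrow> 'n test \<Rightarrow> 'n test" where
  "dlist [] f = f"
| "dlist (i # is) f = pd i (dlist is f)"

definition smooth :: "'n::finite test \<Rightarrow> bool" where
  "smooth f \<longleftrightarrow> (\<forall>is x. dlist is f differentiable (at x))"

definition D0 :: "'n::finite test set" where
  "D0 = {\<phi>. smooth \<phi> \<and> bounded {x. \<phi> x \<noteq> 0}}"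

definition Rad :: "'n::finite test \<Rightarrow> real" where
  "Rad \<phi> = (if \<phi> = (\<lambda>_. 0) then 1 else Sup (norm ` {x. \<phi> x \<noteq> 0}))"

definition mono_pow :: "('n::finite \<Rightarrow> nat) \<Rightarrow> real ^ 'n \<Rightarrow> real" where
  "mono_pow \<alpha> x = (\<Prod>i\<in>UNIV. (x $ i) ^ \<alpha> i)"

definition Dn :: "nat \<Rightarrow> 'n::finite test set" where
  "Dn n = {\<phi> \<in> D0.
      (\<forall>x. Im (\<phi> x) = 0)
    \<and> (\<forall>x. \<phi> (- x) = \<phi> x)
    \<and> Rad \<phi> \<le> 1 / real n
    \<and> integral\<^sup>L lborel \<phi> = 1
    \<and> (\<forall>\<alpha>::'n \<Rightarrow> nat. 1 \<le> sum \<alpha> UNIV \<and> sum \<alpha> UNIV \<le> n \<longrightarrow>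
          integral\<^sup>L lborel (\<lambda>x. mono_pow \<alpha> x *\<^sub>R \<phi> x) = 0)
    \<and> integral\<^sup>L lborel (\<lambda>x. cmod (\<phi> x)) \<le> 1 + 1 / real n
    \<and> (\<forall>is. length is \<le> n \<longrightarrow>
          (\<forall>x. cmod (dlist is \<phi> x) \<le> inverse (Rad \<phi> ^ (2 * (length is + CARD('n))))))}"

definition ultrafilter_on :: "'a set \<Rightarrow> 'a set set \<Rightarrow> bool" where
  "ultrafilter_on X U \<longleftrightarrow>
     U \<subseteq> Pow X \<and> X \<in> U \<and> {} \<notin> U
   \<and> (\<forall>A B. A \<in> U \<and> A \<subseteq> B \<and> B \<subseteq> X \<longrightarrow> B \<in> U)
   \<and> (\<forall>A B. A \<in> U \<and> B \<in> U \<longrightarrow> A \<inter> B \<in> U)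
   \<and> (\<forall>A. A \<subseteq> X \<longrightarrow> A \<in> U \<or> X - A \<in> U)"

definition free_ultrafilter_on :: "'a set \<Rightarrow> 'a set set \<Rightarrow> bool" where
  "free_ultrafilter_on X U \<longleftrightarrow> ultrafilter_on X U \<and> (\<forall>x. {x} \<notin> U)"

text \<open>c^+-good (Keisler): for every index set J of cardinality at most c (here: J a set of
  reals) and every antitone map f from finite subsets of J into U there is a multiplicative
  refinement g.\<close>
definition cplus_good :: "'a set set \<Rightarrow> bool" where
  "cplus_good U \<longleftrightarrow>
    (\<forall>(J::real set) f.
       (\<forall>s. finite s \<and> s \<subseteq> J \<longrightarrow> f s \<in> U) \<and>
       (\<forall>s t. finite t \<and> t \<subseteq> J \<and> s \<subseteq> t \<longrightarrow> f t \<subseteq> f s) \<longrightarrow>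
       (\<exists>g. (\<forall>s. finite s \<and> s \<subseteq> J \<longrightarrow> g s \<in> U \<and> g s \<subseteq> f s) \<and>
            (\<forall>s t. finite s \<and> s \<subseteq> J \<and> finite t \<and> t \<subseteq> J \<longrightarrow> g (s \<union> t) = g s \<inter> g t)))"

definition ae :: "'n::finite test set set \<Rightarrow> ('n test \<Rightarrow> bool) \<Rightarrow> bool" where
  "ae U P \<longleftrightarrow> {\<phi> \<in> D0. P \<phi>} \<in> U"

definition moderate :: "'n::finite test set set \<Rightarrow> 'n net \<Rightarrow> bool" where
  "moderate U A \<longleftrightarrow> (\<exists>m::nat. ae U (\<lambda>\<phi>. cmod (A \<phi>) \<le> inverse (Rad \<phi> ^ m)))"

definition negligible :: "'n::finite test set set \<Rightarrow> 'n net \<Rightarrow> bool" where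
  "negligible U A \<longleftrightarrow> (\<forall>p::nat. ae U (\<lambda>\<phi>. cmod (A \<phi>) < Rad \<phi> ^ p))"

definition Mod :: "'n::finite test set set \<Rightarrow> 'n net set" where
  "Mod U = {A. moderate U A}"

definition gen_eq :: "'n::finite test set set \<Rightarrow> ('n net \<times> 'n net) set" where
  "gen_eq U = {(A, B). moderate U A \<and> moderate U B \<and> negligible U (\<lambda>\<phi>. A \<phi> - B \<phi>)}"

definition cls :: "'n::finite test set set \<Rightarrow> 'n net \<Rightarrow> 'n net set" where
  "cls U A = gen_eq U `` {A}"

definition Chat :: "'n::finite test set set \<Rightarrow> 'n net set set" where
  "Chat U = Mod U // gen_eq U"

definition Rhat :: "'n::finite test set set \<Rightarrow> 'n net set set" where
  "Rhat U = {c \<in> Chat U. \<exists>A \<in> c. \<forall>\<phi>. Im (A \<phi>) = 0}"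

definition rep :: "'n net set \<Rightarrow> 'n net" where
  "rep c = (SOME A. A \<in> c)"

definition gadd :: "'n::finite test set set \<Rightarrow> 'n net set \<Rightarrow> 'n net set \<Rightarrow> 'n net set" where
  "gadd U c d = cls U (\<lambda>\<phi>. rep c \<phi> + rep d \<phi>)"

definition gmult :: "'n::finite test set set \<Rightarrow> 'n net set \<Rightarrow> 'n net set \<Rightarrow> 'n net set" where
  "gmult U c d = cls U (\<lambda>\<phi>. rep c \<phi> * rep d \<phi>)"

definition CH :: "'n::finite test set set \<Rightarrow> 'n net set ring" where
  "CH U = \<lparr>carrier = Chat U, mult = gmult U, one = cls U (\<lambda>_. 1),
           zero = cls U (\<lambda>_. 0), add = gadd U\<rparr>"

definition RH :: "'n::finite test set set \<Rightarrow> 'n net set ring" where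
  "RH U = \<lparr>carrier = Rhat U, mult = gmult U, one = cls U (\<lambda>_. 1),
           zero = cls U (\<lambda>_. 0), add = gadd U\<rparr>"

definition gpos :: "'n::finite test set set \<Rightarrow> 'n net set \<Rightarrow> bool" where
  "gpos U c \<longleftrightarrow> c \<in> Rhat U \<and> c \<noteq> cls U (\<lambda>_. 0) \<and>
     (\<exists>A \<in> c. (\<forall>\<phi>. Im (A \<phi>) = 0) \<and> ae U (\<lambda>\<phi>. Re (A \<phi>) > 0))"

definition gless :: "'n::finite test set set \<Rightarrow> 'n net set \<Rightarrow> 'n net set \<Rightarrow> bool" where
  "gless U a b \<longleftrightarrow> gpos U (b \<ominus>\<^bsub>RH U\<^esub> a)"

definition gle :: "'n::finite test set set \<Rightarrow> 'n net set \<Rightarrow> 'n net set \<Rightarrow> bool" where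
  "gle U a b \<longleftrightarrow> a = b \<or> gless U a b"

definition totally_ordered_field :: "('a, 'b) ring_scheme \<Rightarrow> ('a \<Rightarrow> 'a \<Rightarrow> bool) \<Rightarrow> bool" where
  "totally_ordered_field R lq \<longleftrightarrow> field R
   \<and> (\<forall>a\<in>carrier R. lq a a)
   \<and> (\<forall>a\<in>carrier R. \<forall>b\<in>carrier R. lq a b \<and> lq b a \<longrightarrow> a = b)
   \<and> (\<forall>a\<in>carrier R. \<forall>b\<in>carrier R. \<forall>c\<in>carrier R. lq a b \<and> lq b c \<longrightarrow> lq a c)
   \<and> (\<forall>a\<in>carrier R. \<forall>b\<in>carrier R. lq a b \<or> lq b a)
   \<and> (\<forall>a\<in>carrier R. \<forall>b\<in>carrier R. \<forall>c\<in>carrier R. lq a b \<longrightarrow> lq (a \<oplus>\<^bsub>R\<^esub> c) (b \<oplus>\<^bsub>R\<^esub> c))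
   \<and> (\<forall>a\<in>carrier R. \<forall>b\<in>carrier R. lq \<zero>\<^bsub>R\<^esub> a \<and> lq \<zero>\<^bsub>R\<^esub> b \<longrightarrow> lq \<zero>\<^bsub>R\<^esub> (a \<otimes>\<^bsub>R\<^esub> b))"

definition gabs :: "'n::finite test set set \<Rightarrow> 'n net set \<Rightarrow> 'n net set" where
  "gabs U z = (THE c. c \<in> Rhat U \<and> gle U (cls U (\<lambda>_. 0)) c \<and>
      (\<exists>a\<in>Rhat U. \<exists>b\<in>Rhat U.
          z = gadd U a (gmult U (cls U (\<lambda>_. \<i>)) b) \<and>
          gmult U c c = gadd U (gmult U a a) (gmult U b b)))"

definition is_absolute_value ::
  "('a, 'b) ring_scheme \<Rightarrow> ('a, 'c) ring_scheme \<Rightarrow> ('a \<Rightarrow> 'a \<Rightarrow> bool) \<Rightarrow> ('a \<Rightarrow> 'a) \<Rightarrow> bool" where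
  "is_absolute_value S R lq f \<longleftrightarrow>
     (\<forall>x\<in>carrier S. f x \<in> carrier R \<and> lq \<zero>\<^bsub>R\<^esub> (f x))
   \<and> (\<forall>x\<in>carrier S. f x = \<zero>\<^bsub>R\<^esub> \<longleftrightarrow> x = \<zero>\<^bsub>S\<^esub>)
   \<and> (\<forall>x\<in>carrier S. \<forall>y\<in>carrier S. f (x \<otimes>\<^bsub>S\<^esub> y) = f x \<otimes>\<^bsub>R\<^esub> f y)
   \<and> (\<forall>x\<in>carrier S. \<forall>y\<in>carrier S. lq (f (x \<oplus>\<^bsub>S\<^esub> y)) (f x \<oplus>\<^bsub>R\<^esub> f y))"

end

theory Submission
  imports Defs
begin

lemma Dn_Rad_pos:
  assumes "\<phi> \<in> Dn n"
  shows "0 < Rad \<phi>"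
proof (rule ccontr)
  assume nz: "\<not> 0 < Rad \<phi>"
  have D0: "\<phi> \<in> D0" and int1: "integral\<^sup>L lborel \<phi> = 1"
    using assms unfolding Dn_def by auto
  have ne: "\<phi> \<noteq> (\<lambda>_. 0)"
  proof
    assume "\<phi> = (\<lambda>_. 0)"
    then have "integral\<^sup>L lborel \<phi> = 0" by simp
    with int1 show False by simp
  qed
  have bd: "bounded {x. \<phi> x \<noteq> 0}" using D0 unfolding D0_def by auto
  have R: "Rad \<phi> = Sup (norm ` {x. \<phi> x \<noteq> 0})" using ne unfolding Rad_def by simp
  have bda: "bdd_above (norm ` {x. \<phi> x \<noteq> 0})"
  proof -
    obtain B where "\<forall>x\<in>{x. \<phi> x \<noteq> 0}. norm x \<le> B" using bd bounded_iff by blast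
    then show ?thesis by (intro bdd_aboveI2) blast
  qed
  have sub: "\<forall>x. \<phi> x \<noteq> 0 \<longrightarrow> x = 0"
  proof (intro allI impI)
    fix x assume "\<phi> x \<noteq> 0"
    then have "norm x \<le> Rad \<phi>" unfolding R by (intro cSup_upper bda) auto
    with nz have "norm x \<le> 0" by linarith
    then show "x = 0" by simp
  qed
  have "AE x in lborel. \<phi> x = 0"
    using AE_lborel_singleton[of 0] by eventually_elim (use sub in auto)
  then have "integral\<^sup>L lborel \<phi> = 0" by (rule integral_eq_zero_AE)
  with int1 show False by simp
qed

lemma r_inv_mono:
  fixes r :: real
  assumes "0 < r" "r \<le> 1" "m \<le> k"
  shows "inverse (r ^ m) \<le> inverse (r ^ k)"
proof -
  have "r ^ k \<le> r ^ m" using assms by (intro power_decreasing) auto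
  then show ?thesis using assms by (intro le_imp_inverse_le) auto
qed

lemma r_pow_mono:
  fixes r :: real
  assumes "0 < r" "r \<le> 1" "m \<le> k"
  shows "r ^ k \<le> r ^ m"
  using assms by (intro power_decreasing) auto

lemma r_inv_double:
  fixes r :: real
  assumes "0 < r" "r \<le> 1/2"
  shows "2 * inverse (r ^ m) \<le> inverse (r ^ Suc m)"
proof -
  have "2 \<le> inverse r" using assms by (simp add: field_simps)
  moreover have "inverse (r ^ Suc m) = inverse r * inverse (r ^ m)" by simp
  moreover have "0 \<le> inverse (r ^ m)" using assms by simp
  ultimately show ?thesis by (simp add: mult_right_mono)
qed

lemma r_pow_double:
  fixes r :: real
  assumes "0 < r" "r \<le> 1/2"
  shows "2 * r ^ Suc p \<le> r ^ p"
proof -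
  have "2 * r \<le> 1" using assms by simp
  then have "(2 * r) * r ^ p \<le> 1 * r ^ p" using assms by (intro mult_right_mono) auto
  then show ?thesis by (simp add: algebra_simps)
qed

locale GC =
  fixes U :: "('n::finite) test set set"
  assumes uf: "ultrafilter_on D0 U"
    and DnU: "\<And>n. n \<ge> 1 \<Longrightarrow> Dn n \<in> U"
begin

lemma uf_all: "U \<subseteq> Pow D0 \<and> D0 \<in> U \<and> {} \<notin> U
   \<and> (\<forall>A B. A \<in> U \<and> A \<subseteq> B \<and> B \<subseteq> D0 \<longrightarrow> B \<in> U)
   \<and> (\<forall>A B. A \<in> U \<and> B \<in> U \<longrightarrow> A \<inter> B \<in> U)
   \<and> (\<forall>A. A \<subseteq> D0 \<longrightarrow> A \<in> U \<or> D0 - A \<in> U)"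
  using uf unfolding ultrafilter_on_def .

lemma uf_up: "A \<in> U \<Longrightarrow> A \<subseteq> B \<Longrightarrow> B \<subseteq> D0 \<Longrightarrow> B \<in> U"
proof -
  have "\<forall>A B. A \<in> U \<and> A \<subseteq> B \<and> B \<subseteq> D0 \<longrightarrow> B \<in> U" using uf_all by (elim conjE) assumption
  then show "A \<in> U \<Longrightarrow> A \<subseteq> B \<Longrightarrow> B \<subseteq> D0 \<Longrightarrow> B \<in> U" by blast
qed

lemma uf_int: "A \<in> U \<Longrightarrow> B \<in> U \<Longrightarrow> A \<inter> B \<in> U"
proof -
  have "\<forall>A B. A \<in> U \<and> B \<in> U \<longrightarrow> A \<inter> B \<in> U" using uf_all by (elim conjE) assumption
  then show "A \<in> U \<Longrightarrow> B \<in> U \<Longrightarrow> A \<inter> B \<in> U" by blast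
qed

lemma uf_compl: "A \<subseteq> D0 \<Longrightarrow> A \<in> U \<or> D0 - A \<in> U"
proof -
  have "\<forall>A. A \<subseteq> D0 \<longrightarrow> A \<in> U \<or> D0 - A \<in> U" using uf_all by (elim conjE) assumption
  then show "A \<subseteq> D0 \<Longrightarrow> A \<in> U \<or> D0 - A \<in> U" by blast
qed

lemma uf_empty: "{} \<notin> U"
  using uf_all by (elim conjE) assumption

lemma ae_mono:
  assumes "ae U P" "\<And>\<phi>. \<phi> \<in> D0 \<Longrightarrow> P \<phi> \<Longrightarrow> Q \<phi>"
  shows "ae U Q"
proof -
  have "{\<phi>\<in>D0. P \<phi>} \<subseteq> {\<phi>\<in>D0. Q \<phi>}" using assms(2) by blast
  then show ?thesis using assms(1) uf_up[of "{\<phi>\<in>D0. P \<phi>}" "{\<phi>\<in>D0. Q \<phi>}"]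
    unfolding ae_def by blast
qed

lemma ae_conj:
  assumes "ae U P" "ae U Q"
  shows "ae U (\<lambda>\<phi>. P \<phi> \<and> Q \<phi>)"
proof -
  have "{\<phi> \<in> D0. P \<phi>} \<inter> {\<phi> \<in> D0. Q \<phi>} \<in> U"
    using uf_int assms unfolding ae_def by blast
  moreover have "{\<phi> \<in> D0. P \<phi>} \<inter> {\<phi> \<in> D0. Q \<phi>} = {\<phi> \<in> D0. P \<phi> \<and> Q \<phi>}" by auto
  ultimately show ?thesis unfolding ae_def by simp
qed

lemma ae_False: "\<not> ae U (\<lambda>_. False)"
  using uf_empty unfolding ae_def by simp

lemma ae_contr: "ae U P \<Longrightarrow> (\<And>\<phi>. \<phi> \<in> D0 \<Longrightarrow> P \<phi> \<Longrightarrow> False) \<Longrightarrow> False"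
  using ae_mono[of P "\<lambda>_. False"] ae_False by blast

lemma ae_cases: "ae U P \<or> ae U (\<lambda>\<phi>. \<not> P \<phi>)"
proof -
  have "{\<phi> \<in> D0. P \<phi>} \<in> U \<or> D0 - {\<phi> \<in> D0. P \<phi>} \<in> U"
    by (rule uf_compl) blast
  moreover have eq: "{\<phi> \<in> D0. \<not> P \<phi>} = D0 - {\<phi> \<in> D0. P \<phi>}" by blast
  ultimately show ?thesis unfolding ae_def eq by blast
qed

lemma ae_not: "\<not> ae U P \<Longrightarrow> ae U (\<lambda>\<phi>. \<not> P \<phi>)"
  using ae_cases by blast

lemma ae_Dn: assumes "n \<ge> 1" shows "ae U (\<lambda>\<phi>. 0 < Rad \<phi> \<and> Rad \<phi> \<le> 1 / real n)"
proof -
  have "(Dn n :: 'n test set) \<subseteq> {\<phi> \<in> D0. 0 < Rad \<phi> \<and> Rad \<phi> \<le> 1 / real n}"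
  proof
    fix \<phi> assume a: "\<phi> \<in> Dn n"
    have "\<phi> \<in> D0 \<and> Rad \<phi> \<le> 1 / real n" using a unfolding Dn_def by blast
    then show "\<phi> \<in> {\<phi> \<in> D0. 0 < Rad \<phi> \<and> Rad \<phi> \<le> 1 / real n}" using Dn_Rad_pos[OF a] by blast
  qed
  then show ?thesis using uf_up[OF DnU[OF assms]] unfolding ae_def by blast
qed

lemma ae_R: "ae U (\<lambda>\<phi>. 0 < Rad \<phi> \<and> Rad \<phi> \<le> 1/2)"
  using ae_Dn[of 2] by simp

definition good :: "'n test \<Rightarrow> bool" where
  "good \<phi> \<longleftrightarrow> 0 < Rad \<phi> \<and> Rad \<phi> \<le> 1/2"

lemma ae_good: "ae U good"
  using ae_R unfolding good_def .

lemma ae_good_conj: "ae U P \<Longrightarrow> ae U (\<lambda>\<phi>. good \<phi> \<and> P \<phi>)"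
  using ae_conj[OF ae_good] .

lemma moderate_mono:
  assumes "moderate U A" "ae U (\<lambda>\<phi>. cmod (B \<phi>) \<le> cmod (A \<phi>))"
  shows "moderate U B"
proof -
  obtain m where m: "ae U (\<lambda>\<phi>. cmod (A \<phi>) \<le> inverse (Rad \<phi> ^ m))"
    using assms(1) unfolding moderate_def by blast
  have "ae U (\<lambda>\<phi>. cmod (B \<phi>) \<le> inverse (Rad \<phi> ^ m))"
    by (rule ae_mono[OF ae_conj[OF m assms(2)]]) auto
  then show ?thesis unfolding moderate_def by blast
qed

lemma negligible_mono:
  assumes "negligible U A" "ae U (\<lambda>\<phi>. cmod (B \<phi>) \<le> cmod (A \<phi>))"
  shows "negligible U B"
  unfolding negligible_def
proof
  fix p
  have m: "ae U (\<lambda>\<phi>. cmod (A \<phi>) < Rad \<phi> ^ p)"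
    using assms(1) unfolding negligible_def by blast
  show "ae U (\<lambda>\<phi>. cmod (B \<phi>) < Rad \<phi> ^ p)"
    by (rule ae_mono[OF ae_conj[OF m assms(2)]]) auto
qed

lemma ae_True: "ae U (\<lambda>_. True)"
  by (rule ae_mono[OF ae_good]) auto

lemma moderate_const: "moderate U (\<lambda>_. c)"
proof -
  define n where "n = nat \<lceil>cmod c\<rceil> + 1"
  have n1: "n \<ge> 1" unfolding n_def by simp
  have cn: "cmod c \<le> real n" unfolding n_def by linarith
  have "ae U (\<lambda>\<phi>. cmod c \<le> inverse (Rad \<phi> ^ 1))"
  proof (rule ae_mono[OF ae_Dn[OF n1]])
    fix \<phi> assume "0 < Rad \<phi> \<and> Rad \<phi> \<le> 1 / real n"
    then have "real n \<le> inverse (Rad \<phi>)" using n1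
      by (simp add: field_simps)
    then show "cmod c \<le> inverse (Rad \<phi> ^ 1)" using cn by simp
  qed
  then show ?thesis unfolding moderate_def by blast
qed

lemma moderate_add:
  assumes "moderate U A" "moderate U B"
  shows "moderate U (\<lambda>\<phi>. A \<phi> + B \<phi>)"
proof -
  obtain m where m: "ae U (\<lambda>\<phi>. cmod (A \<phi>) \<le> inverse (Rad \<phi> ^ m))"
    using assms(1) unfolding moderate_def by blast
  obtain k where k: "ae U (\<lambda>\<phi>. cmod (B \<phi>) \<le> inverse (Rad \<phi> ^ k))"
    using assms(2) unfolding moderate_def by blast
  have "ae U (\<lambda>\<phi>. cmod (A \<phi> + B \<phi>) \<le> inverse (Rad \<phi> ^ Suc (m + k)))"
  proof (rule ae_mono[OF ae_good_conj[OF ae_conj[OF m k]]])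
    fix \<phi> assume a: "good \<phi> \<and> cmod (A \<phi>) \<le> inverse (Rad \<phi> ^ m) \<and> cmod (B \<phi>) \<le> inverse (Rad \<phi> ^ k)"
    then have r: "0 < Rad \<phi>" "Rad \<phi> \<le> 1/2" unfolding good_def by auto
    have "inverse (Rad \<phi> ^ m) \<le> inverse (Rad \<phi> ^ (m + k))"
      "inverse (Rad \<phi> ^ k) \<le> inverse (Rad \<phi> ^ (m + k))"
      using r by (auto intro: r_inv_mono)
    moreover have "2 * inverse (Rad \<phi> ^ (m + k)) \<le> inverse (Rad \<phi> ^ Suc (m + k))"
      using r by (rule r_inv_double)
    moreover have "cmod (A \<phi> + B \<phi>) \<le> cmod (A \<phi>) + cmod (B \<phi>)" by (rule norm_triangle_ineq)
    ultimately show "cmod (A \<phi> + B \<phi>) \<le> inverse (Rad \<phi> ^ Suc (m + k))" using a by linarith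
  qed
  then show ?thesis unfolding moderate_def by blast
qed

lemma moderate_mult:
  assumes "moderate U A" "moderate U B"
  shows "moderate U (\<lambda>\<phi>. A \<phi> * B \<phi>)"
proof -
  obtain m where m: "ae U (\<lambda>\<phi>. cmod (A \<phi>) \<le> inverse (Rad \<phi> ^ m))"
    using assms(1) unfolding moderate_def by blast
  obtain k where k: "ae U (\<lambda>\<phi>. cmod (B \<phi>) \<le> inverse (Rad \<phi> ^ k))"
    using assms(2) unfolding moderate_def by blast
  have "ae U (\<lambda>\<phi>. cmod (A \<phi> * B \<phi>) \<le> inverse (Rad \<phi> ^ (m + k)))"
  proof (rule ae_mono[OF ae_good_conj[OF ae_conj[OF m k]]])
    fix \<phi> assume a: "good \<phi> \<and> cmod (A \<phi>) \<le> inverse (Rad \<phi> ^ m) \<and> cmod (B \<phi>) \<le> inverse (Rad \<phi> ^ k)"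
    have "cmod (A \<phi>) * cmod (B \<phi>) \<le> inverse (Rad \<phi> ^ m) * inverse (Rad \<phi> ^ k)"
      using a by (intro mult_mono) (auto simp: good_def)
    also have "\<dots> = inverse (Rad \<phi> ^ (m + k))" by (simp add: power_add)
    finally show "cmod (A \<phi> * B \<phi>) \<le> inverse (Rad \<phi> ^ (m + k))" by (simp add: norm_mult)
  qed
  then show ?thesis unfolding moderate_def by blast
qed

lemma moderate_uminus: "moderate U A \<Longrightarrow> moderate U (\<lambda>\<phi>. - A \<phi>)"
  by (erule moderate_mono) (simp add: ae_True)

lemma moderate_diff: "moderate U A \<Longrightarrow> moderate U B \<Longrightarrow> moderate U (\<lambda>\<phi>. A \<phi> - B \<phi>)"
  using moderate_add[of A "\<lambda>\<phi>. - B \<phi>"] moderate_uminus[of B] by simp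

lemma negligible_zero: "negligible U (\<lambda>_. 0)"
  unfolding negligible_def
proof
  fix p show "ae U (\<lambda>\<phi>. cmod 0 < Rad \<phi> ^ p)"
    by (rule ae_mono[OF ae_good]) (simp add: good_def)
qed

lemma negligible_add:
  assumes "negligible U A" "negligible U B"
  shows "negligible U (\<lambda>\<phi>. A \<phi> + B \<phi>)"
  unfolding negligible_def
proof
  fix p
  have m: "ae U (\<lambda>\<phi>. cmod (A \<phi>) < Rad \<phi> ^ Suc p)"
    using assms(1) unfolding negligible_def by blast
  have k: "ae U (\<lambda>\<phi>. cmod (B \<phi>) < Rad \<phi> ^ Suc p)"
    using assms(2) unfolding negligible_def by blast
  show "ae U (\<lambda>\<phi>. cmod (A \<phi> + B \<phi>) < Rad \<phi> ^ p)"
  proof (rule ae_mono[OF ae_good_conj[OF ae_conj[OF m k]]])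
    fix \<phi> assume a: "good \<phi> \<and> cmod (A \<phi>) < Rad \<phi> ^ Suc p \<and> cmod (B \<phi>) < Rad \<phi> ^ Suc p"
    then have r: "0 < Rad \<phi>" "Rad \<phi> \<le> 1/2" unfolding good_def by auto
    have "2 * Rad \<phi> ^ Suc p \<le> Rad \<phi> ^ p" using r by (rule r_pow_double)
    moreover have "cmod (A \<phi> + B \<phi>) \<le> cmod (A \<phi>) + cmod (B \<phi>)" by (rule norm_triangle_ineq)
    ultimately show "cmod (A \<phi> + B \<phi>) < Rad \<phi> ^ p" using a by linarith
  qed
qed

lemma negligible_uminus: "negligible U A \<Longrightarrow> negligible U (\<lambda>\<phi>. - A \<phi>)"
  by (erule negligible_mono) (simp add: ae_True)

lemma negligible_diff: "negligible U A \<Longrightarrow> negligible U B \<Longrightarrow> negligible U (\<lambda>\<phi>. A \<phi> - B \<phi>)"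
  using negligible_add[of A "\<lambda>\<phi>. - B \<phi>"] negligible_uminus[of B] by simp

lemma negligible_mult:
  assumes "negligible U A" "moderate U B"
  shows "negligible U (\<lambda>\<phi>. A \<phi> * B \<phi>)"
  unfolding negligible_def
proof
  fix p
  obtain m where k: "ae U (\<lambda>\<phi>. cmod (B \<phi>) \<le> inverse (Rad \<phi> ^ m))"
    using assms(2) unfolding moderate_def by blast
  have a: "ae U (\<lambda>\<phi>. cmod (A \<phi>) < Rad \<phi> ^ (p + m))"
    using assms(1) unfolding negligible_def by blast
  show "ae U (\<lambda>\<phi>. cmod (A \<phi> * B \<phi>) < Rad \<phi> ^ p)"
  proof (rule ae_mono[OF ae_good_conj[OF ae_conj[OF a k]]])
    fix \<phi> assume a: "good \<phi> \<and> cmod (A \<phi>) < Rad \<phi> ^ (p + m) \<and> cmod (B \<phi>) \<le> inverse (Rad \<phi> ^ m)"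
    then have r: "0 < Rad \<phi>" unfolding good_def by auto
    have "cmod (A \<phi>) * cmod (B \<phi>) \<le> cmod (A \<phi>) * inverse (Rad \<phi> ^ m)"
      using a by (intro mult_left_mono) auto
    also have "\<dots> < Rad \<phi> ^ (p + m) * inverse (Rad \<phi> ^ m)"
      using a r by (intro mult_strict_right_mono) auto
    also have "\<dots> = Rad \<phi> ^ p" using r by (simp add: power_add)
    finally show "cmod (A \<phi> * B \<phi>) < Rad \<phi> ^ p" by (simp add: norm_mult)
  qed
qed

lemma negligible_mult2: "moderate U A \<Longrightarrow> negligible U B \<Longrightarrow> negligible U (\<lambda>\<phi>. A \<phi> * B \<phi>)"
  using negligible_mult[of B A] by (simp add: mult.commute)

lemma negligible_moderate: assumes "negligible U A" shows "moderate U A"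
proof -
  have "ae U (\<lambda>\<phi>. cmod (A \<phi>) < Rad \<phi> ^ 0)" using assms unfolding negligible_def by blast
  then have "ae U (\<lambda>\<phi>. cmod (A \<phi>) \<le> inverse (Rad \<phi> ^ 0))" by (rule ae_mono) simp
  then show ?thesis unfolding moderate_def by blast
qed

lemma not_negligible:
  assumes "\<not> negligible U A"
  obtains p where "ae U (\<lambda>\<phi>. Rad \<phi> ^ p \<le> cmod (A \<phi>))"
proof -
  obtain p where "\<not> ae U (\<lambda>\<phi>. cmod (A \<phi>) < Rad \<phi> ^ p)"
    using assms unfolding negligible_def by blast
  then have "ae U (\<lambda>\<phi>. Rad \<phi> ^ p \<le> cmod (A \<phi>))"
    by (rule ae_mono[OF ae_not]) auto
  then show ?thesis using that by blast
qed

lemma one_not_negligible: "\<not> negligible U (\<lambda>_. 1)"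
proof
  assume "negligible U (\<lambda>_. 1)"
  then have a: "ae U (\<lambda>\<phi>. cmod 1 < Rad \<phi> ^ 1)" unfolding negligible_def by blast
  show False
    by (rule ae_contr[OF ae_good_conj[OF a]]) (auto simp: good_def)
qed

lemma negligible_cong: "negligible U A \<Longrightarrow> (\<And>\<phi>. B \<phi> = A \<phi>) \<Longrightarrow> negligible U B"
proof -
  assume "negligible U A" "\<And>\<phi>. B \<phi> = A \<phi>"
  moreover have "B = A" using calculation(2) by (rule ext)
  ultimately show ?thesis by simp
qed

lemma moderate_cong: "moderate U A \<Longrightarrow> (\<And>\<phi>. B \<phi> = A \<phi>) \<Longrightarrow> moderate U B"
proof -
  assume "moderate U A" "\<And>\<phi>. B \<phi> = A \<phi>"
  moreover have "B = A" using calculation(2) by (rule ext)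
  ultimately show ?thesis by simp
qed

lemma negligible_flip: "negligible U (\<lambda>\<phi>. A \<phi> - B \<phi>) \<Longrightarrow> negligible U (\<lambda>\<phi>. B \<phi> - A \<phi>)"
  by (erule negligible_cong[OF negligible_uminus]) simp

lemma mem_cls: "B \<in> cls U A \<longleftrightarrow> moderate U A \<and> moderate U B \<and> negligible U (\<lambda>\<phi>. A \<phi> - B \<phi>)"
  by (simp add: cls_def gen_eq_def)

lemma self_cls: "moderate U A \<Longrightarrow> A \<in> cls U A"
  unfolding mem_cls by (simp add: negligible_zero)

lemma cls_eq:
  assumes "moderate U A" "moderate U B"
  shows "cls U A = cls U B \<longleftrightarrow> negligible U (\<lambda>\<phi>. A \<phi> - B \<phi>)"
proof
  assume "cls U A = cls U B"
  then have "A \<in> cls U B" using self_cls[OF assms(1)] by simp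
  then show "negligible U (\<lambda>\<phi>. A \<phi> - B \<phi>)" unfolding mem_cls by (blast intro: negligible_flip)
next
  assume n: "negligible U (\<lambda>\<phi>. A \<phi> - B \<phi>)"
  show "cls U A = cls U B"
    unfolding set_eq_iff
  proof
    fix C
    have 1: "negligible U (\<lambda>\<phi>. A \<phi> - C \<phi>)" if "negligible U (\<lambda>\<phi>. B \<phi> - C \<phi>)"
      by (rule negligible_cong[OF negligible_add[OF n that]]) simp
    have 2: "negligible U (\<lambda>\<phi>. B \<phi> - C \<phi>)" if "negligible U (\<lambda>\<phi>. A \<phi> - C \<phi>)"
      by (rule negligible_cong[OF negligible_add[OF negligible_flip[OF n] that]]) simp
    show "C \<in> cls U A \<longleftrightarrow> C \<in> cls U B" unfolding mem_cls using assms 1 2 by blast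
  qed
qed

lemma rep_cls:
  assumes "moderate U A"
  shows "moderate U (rep (cls U A))" "negligible U (\<lambda>\<phi>. A \<phi> - rep (cls U A) \<phi>)"
proof -
  have "rep (cls U A) \<in> cls U A" unfolding rep_def by (rule someI[of "\<lambda>B. B \<in> cls U A" A, OF self_cls[OF assms]])
  then show "moderate U (rep (cls U A))" "negligible U (\<lambda>\<phi>. A \<phi> - rep (cls U A) \<phi>)"
    unfolding mem_cls by auto
qed

lemma Chat_iff: "c \<in> Chat U \<longleftrightarrow> (\<exists>A. moderate U A \<and> c = cls U A)"
  unfolding Chat_def quotient_def Mod_def cls_def by blast

definition realnet :: "'n net \<Rightarrow> bool" where
  "realnet A \<longleftrightarrow> (\<forall>\<phi>. Im (A \<phi>) = 0)"

lemma Rhat_iff: "c \<in> Rhat U \<longleftrightarrow> (\<exists>A. moderate U A \<and> realnet A \<and> c = cls U A)"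
proof
  assume "c \<in> Rhat U"
  then obtain A0 A where c: "moderate U A0" "c = cls U A0" and A: "A \<in> c" "\<forall>\<phi>. Im (A \<phi>) = 0"
    unfolding Rhat_def Chat_iff by blast
  have "A \<in> cls U A0" using A c by simp
  then have "moderate U A" "negligible U (\<lambda>\<phi>. A0 \<phi> - A \<phi>)" unfolding mem_cls by auto
  then have "c = cls U A" using c cls_eq by (simp add: negligible_flip)
  then show "\<exists>A. moderate U A \<and> realnet A \<and> c = cls U A"
    using \<open>moderate U A\<close> A unfolding realnet_def by blast
next
  assume "\<exists>A. moderate U A \<and> realnet A \<and> c = cls U A"
  then obtain A where "moderate U A" "realnet A" "c = cls U A" by blast
  then show "c \<in> Rhat U" unfolding Rhat_def Chat_iff realnet_def using self_cls by blast
qed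

lemma RhatE:
  assumes "c \<in> Rhat U"
  obtains A where "moderate U A" "realnet A" "c = cls U A"
  using assms Rhat_iff by blast

lemma ChatE:
  assumes "c \<in> Chat U"
  obtains A where "moderate U A" "c = cls U A"
  using assms Chat_iff by blast

lemma Rhat_I: "moderate U A \<Longrightarrow> realnet A \<Longrightarrow> cls U A \<in> Rhat U"
  using Rhat_iff by blast

lemma Chat_I: "moderate U A \<Longrightarrow> cls U A \<in> Chat U"
  using Chat_iff by blast

lemma gadd_cls:
  assumes "moderate U A" "moderate U B"
  shows "gadd U (cls U A) (cls U B) = cls U (\<lambda>\<phi>. A \<phi> + B \<phi>)"
proof -
  note a = rep_cls[OF assms(1)] and b = rep_cls[OF assms(2)]
  have "negligible U (\<lambda>\<phi>. (rep (cls U A) \<phi> + rep (cls U B) \<phi>) - (A \<phi> + B \<phi>))"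
    by (rule negligible_cong[OF negligible_add[OF negligible_flip[OF a(2)] negligible_flip[OF b(2)]]]) simp
  then show ?thesis unfolding gadd_def
    by (subst cls_eq) (auto intro: moderate_add a b assms)
qed

lemma gmult_cls:
  assumes "moderate U A" "moderate U B"
  shows "gmult U (cls U A) (cls U B) = cls U (\<lambda>\<phi>. A \<phi> * B \<phi>)"
proof -
  note a = rep_cls[OF assms(1)] and b = rep_cls[OF assms(2)]
  have "negligible U (\<lambda>\<phi>. rep (cls U A) \<phi> * (rep (cls U B) \<phi> - B \<phi>) + (rep (cls U A) \<phi> - A \<phi>) * B \<phi>)"
    by (rule negligible_add[OF negligible_mult2[OF a(1) negligible_flip[OF b(2)]]
          negligible_mult[OF negligible_flip[OF a(2)] assms(2)]])
  then have "negligible U (\<lambda>\<phi>. (rep (cls U A) \<phi> * rep (cls U B) \<phi>) - (A \<phi> * B \<phi>))"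
    by (rule negligible_cong) (simp add: algebra_simps)
  then show ?thesis unfolding gmult_def
    by (subst cls_eq) (auto intro: moderate_mult a b assms)
qed

lemma realnet_add: "realnet A \<Longrightarrow> realnet B \<Longrightarrow> realnet (\<lambda>\<phi>. A \<phi> + B \<phi>)"
  unfolding realnet_def by simp
lemma realnet_mult: "realnet A \<Longrightarrow> realnet B \<Longrightarrow> realnet (\<lambda>\<phi>. A \<phi> * B \<phi>)"
  unfolding realnet_def by simp
lemma realnet_uminus: "realnet A \<Longrightarrow> realnet (\<lambda>\<phi>. - A \<phi>)"
  unfolding realnet_def by simp
lemma realnet_diff: "realnet A \<Longrightarrow> realnet B \<Longrightarrow> realnet (\<lambda>\<phi>. A \<phi> - B \<phi>)"
  unfolding realnet_def by simp
lemma realnet_const: "Im c = 0 \<Longrightarrow> realnet (\<lambda>_. c)"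
  unfolding realnet_def by simp
lemma realnet_of_real: "realnet (\<lambda>\<phi>. complex_of_real (f \<phi>))"
  unfolding realnet_def by simp

lemma RH_simps [simp]:
  "carrier (RH U) = Rhat U" "mult (RH U) = gmult U" "one (RH U) = cls U (\<lambda>_. 1)"
  "zero (RH U) = cls U (\<lambda>_. 0)" "add (RH U) = gadd U"
  by (simp_all add: RH_def)

lemma CH_simps [simp]:
  "carrier (CH U) = Chat U" "mult (CH U) = gmult U" "one (CH U) = cls U (\<lambda>_. 1)"
  "zero (CH U) = cls U (\<lambda>_. 0)" "add (CH U) = gadd U"
  by (simp_all add: CH_def)

lemmas mods = moderate_add moderate_mult moderate_const moderate_uminus moderate_diff
lemmas reals = realnet_add realnet_mult realnet_const realnet_uminus realnet_diff realnet_of_real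

lemma RH_abelian: "abelian_group (RH U)"
proof (rule abelian_groupI)
  fix x y assume "x \<in> carrier (RH U)" "y \<in> carrier (RH U)"
  then show "x \<oplus>\<^bsub>RH U\<^esub> y \<in> carrier (RH U)"
    by (auto elim!: RhatE simp: gadd_cls intro!: Rhat_I mods reals)
next
  show "\<zero>\<^bsub>RH U\<^esub> \<in> carrier (RH U)" by (auto intro!: Rhat_I mods reals)
next
  fix x y z assume "x \<in> carrier (RH U)" "y \<in> carrier (RH U)" "z \<in> carrier (RH U)"
  then show "x \<oplus>\<^bsub>RH U\<^esub> y \<oplus>\<^bsub>RH U\<^esub> z = x \<oplus>\<^bsub>RH U\<^esub> (y \<oplus>\<^bsub>RH U\<^esub> z)"
    by (auto elim!: RhatE simp: gadd_cls mods add.assoc)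
next
  fix x y assume "x \<in> carrier (RH U)" "y \<in> carrier (RH U)"
  then show "x \<oplus>\<^bsub>RH U\<^esub> y = y \<oplus>\<^bsub>RH U\<^esub> x"
    by (auto elim!: RhatE simp: gadd_cls mods add.commute)
next
  fix x assume "x \<in> carrier (RH U)"
  then show "\<zero>\<^bsub>RH U\<^esub> \<oplus>\<^bsub>RH U\<^esub> x = x"
    by (auto elim!: RhatE simp: gadd_cls mods)
next
  fix x assume "x \<in> carrier (RH U)"
  then obtain A where A: "moderate U A" "realnet A" "x = cls U A" by (auto elim!: RhatE)
  have "cls U (\<lambda>\<phi>. - A \<phi>) \<in> carrier (RH U)" using A by (auto intro!: Rhat_I mods reals)
  moreover have "cls U (\<lambda>\<phi>. - A \<phi>) \<oplus>\<^bsub>RH U\<^esub> x = \<zero>\<^bsub>RH U\<^esub>"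
    using A by (simp add: gadd_cls mods)
  ultimately show "\<exists>y\<in>carrier (RH U). y \<oplus>\<^bsub>RH U\<^esub> x = \<zero>\<^bsub>RH U\<^esub>" by blast
qed

lemma RH_comm_monoid: "comm_monoid (RH U)"
proof (rule comm_monoidI)
  fix x y assume "x \<in> carrier (RH U)" "y \<in> carrier (RH U)"
  then show "x \<otimes>\<^bsub>RH U\<^esub> y \<in> carrier (RH U)"
    by (auto elim!: RhatE simp: gmult_cls intro!: Rhat_I mods reals)
next
  show "\<one>\<^bsub>RH U\<^esub> \<in> carrier (RH U)" by (auto intro!: Rhat_I mods reals)
next
  fix x y z assume "x \<in> carrier (RH U)" "y \<in> carrier (RH U)" "z \<in> carrier (RH U)"
  then show "x \<otimes>\<^bsub>RH U\<^esub> y \<otimes>\<^bsub>RH U\<^esub> z = x \<otimes>\<^bsub>RH U\<^esub> (y \<otimes>\<^bsub>RH U\<^esub> z)"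
    by (auto elim!: RhatE simp: gmult_cls mods mult.assoc)
next
  fix x assume "x \<in> carrier (RH U)"
  then show "\<one>\<^bsub>RH U\<^esub> \<otimes>\<^bsub>RH U\<^esub> x = x"
    by (auto elim!: RhatE simp: gmult_cls mods)
next
  fix x y assume "x \<in> carrier (RH U)" "y \<in> carrier (RH U)"
  then show "x \<otimes>\<^bsub>RH U\<^esub> y = y \<otimes>\<^bsub>RH U\<^esub> x"
    by (auto elim!: RhatE simp: gmult_cls mods mult.commute)
qed

lemma RH_cring: "cring (RH U)"
proof (rule cringI[OF RH_abelian RH_comm_monoid])
  fix x y z assume "x \<in> carrier (RH U)" "y \<in> carrier (RH U)" "z \<in> carrier (RH U)"
  then show "(x \<oplus>\<^bsub>RH U\<^esub> y) \<otimes>\<^bsub>RH U\<^esub> z = x \<otimes>\<^bsub>RH U\<^esub> z \<oplus>\<^bsub>RH U\<^esub> y \<otimes>\<^bsub>RH U\<^esub> z"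
    by (auto elim!: RhatE simp: gmult_cls gadd_cls mods distrib_right)
qed

lemma cls_zero_iff: "moderate U A \<Longrightarrow> cls U A = cls U (\<lambda>_. 0) \<longleftrightarrow> negligible U A"
  by (subst cls_eq) (auto simp: moderate_const)

lemma RH_field: "field (RH U)"
proof (rule cring.cring_fieldI2[OF RH_cring])
  show "\<zero>\<^bsub>RH U\<^esub> \<noteq> \<one>\<^bsub>RH U\<^esub>"
    using cls_zero_iff[of "\<lambda>_. 1"] one_not_negligible by (auto simp: moderate_const)
next
  fix a assume a: "a \<in> carrier (RH U)" "a \<noteq> \<zero>\<^bsub>RH U\<^esub>"
  then obtain A where A: "moderate U A" "realnet A" "a = cls U A" by (auto elim!: RhatE)
  then have nn: "\<not> negligible U A" using a cls_zero_iff by auto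
  then obtain p where p: "ae U (\<lambda>\<phi>. Rad \<phi> ^ p \<le> cmod (A \<phi>))" by (rule not_negligible)
  define B where "B = (\<lambda>\<phi>. inverse (A \<phi>))"
  have rB: "realnet B" using A(2) unfolding B_def realnet_def by (simp add: complex_is_Real_iff)
  have mB: "moderate U B"
  proof -
    have "ae U (\<lambda>\<phi>. cmod (B \<phi>) \<le> inverse (Rad \<phi> ^ p))"
    proof (rule ae_mono[OF ae_good_conj[OF p]])
      fix \<phi> assume h: "good \<phi> \<and> Rad \<phi> ^ p \<le> cmod (A \<phi>)"
      then have "0 < Rad \<phi> ^ p" unfolding good_def by auto
      then show "cmod (B \<phi>) \<le> inverse (Rad \<phi> ^ p)" using h unfolding B_def
        by (simp add: norm_inverse le_imp_inverse_le)
    qed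
    then show ?thesis unfolding moderate_def by blast
  qed
  have "negligible U (\<lambda>\<phi>. A \<phi> * B \<phi> - 1)"
  proof (rule negligible_mono[OF negligible_zero])
    show "ae U (\<lambda>\<phi>. cmod (A \<phi> * B \<phi> - 1) \<le> cmod 0)"
    proof (rule ae_mono[OF ae_good_conj[OF p]])
      fix \<phi> assume h: "good \<phi> \<and> Rad \<phi> ^ p \<le> cmod (A \<phi>)"
      then have "0 < Rad \<phi> ^ p" unfolding good_def by auto
      then have "A \<phi> \<noteq> 0" using h by auto
      then show "cmod (A \<phi> * B \<phi> - 1) \<le> cmod 0" unfolding B_def by simp
    qed
  qed
  then have "a \<otimes>\<^bsub>RH U\<^esub> cls U B = \<one>\<^bsub>RH U\<^esub>"
    using A mB by (simp add: gmult_cls cls_eq mods)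
  moreover have "cls U B \<in> carrier (RH U)" using mB rB by (simp add: Rhat_I)
  ultimately show "\<exists>b\<in>carrier (RH U). a \<otimes>\<^bsub>RH U\<^esub> b = \<one>\<^bsub>RH U\<^esub>" by blast
qed

lemma RH_minus:
  assumes "moderate U A" "realnet A" "moderate U B" "realnet B"
  shows "cls U B \<ominus>\<^bsub>RH U\<^esub> cls U A = cls U (\<lambda>\<phi>. B \<phi> - A \<phi>)"
proof -
  interpret abelian_group "RH U" by (rule RH_abelian)
  have "\<ominus>\<^bsub>RH U\<^esub> cls U A = cls U (\<lambda>\<phi>. - A \<phi>)"
    by (rule minus_equality) (use assms in \<open>auto simp: gadd_cls mods intro!: Rhat_I reals\<close>)
  then show ?thesis unfolding a_minus_def using assms by (simp add: gadd_cls mods)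
qed

definition PS :: "'n net \<Rightarrow> bool" where
  "PS A \<longleftrightarrow> (\<exists>p. ae U (\<lambda>\<phi>. Rad \<phi> ^ p \<le> Re (A \<phi>)))"

lemma PS_not_neg: assumes "PS A" shows "\<not> negligible U A"
proof
  assume n: "negligible U A"
  obtain p where p: "ae U (\<lambda>\<phi>. Rad \<phi> ^ p \<le> Re (A \<phi>))" using assms unfolding PS_def by blast
  have q: "ae U (\<lambda>\<phi>. cmod (A \<phi>) < Rad \<phi> ^ p)" using n unfolding negligible_def by blast
  show False
  proof (rule ae_contr[OF ae_conj[OF p q]])
    fix \<phi> assume "Rad \<phi> ^ p \<le> Re (A \<phi>) \<and> cmod (A \<phi>) < Rad \<phi> ^ p"
    moreover have "Re (A \<phi>) \<le> cmod (A \<phi>)" by (rule complex_Re_le_cmod)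
    ultimately show False by linarith
  qed
qed

lemma PS_cong_neg:
  assumes "PS A" "negligible U (\<lambda>\<phi>. A \<phi> - B \<phi>)"
  shows "PS B"
proof -
  obtain p where p: "ae U (\<lambda>\<phi>. Rad \<phi> ^ p \<le> Re (A \<phi>))" using assms unfolding PS_def by blast
  have q: "ae U (\<lambda>\<phi>. cmod (A \<phi> - B \<phi>) < Rad \<phi> ^ Suc p)" using assms(2) unfolding negligible_def by blast
  have "ae U (\<lambda>\<phi>. Rad \<phi> ^ Suc p \<le> Re (B \<phi>))"
  proof (rule ae_mono[OF ae_good_conj[OF ae_conj[OF p q]]])
    fix \<phi> assume h: "good \<phi> \<and> Rad \<phi> ^ p \<le> Re (A \<phi>) \<and> cmod (A \<phi> - B \<phi>) < Rad \<phi> ^ Suc p"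
    then have "2 * Rad \<phi> ^ Suc p \<le> Rad \<phi> ^ p" unfolding good_def by (intro r_pow_double) auto
    moreover have "Re (A \<phi> - B \<phi>) \<le> cmod (A \<phi> - B \<phi>)" by (rule complex_Re_le_cmod)
    ultimately show "Rad \<phi> ^ Suc p \<le> Re (B \<phi>)" using h by simp
  qed
  then show ?thesis unfolding PS_def by blast
qed

lemma PS_fun: "PS A \<Longrightarrow> (\<And>\<phi>. B \<phi> = A \<phi>) \<Longrightarrow> PS B"
proof -
  assume "PS A" "\<And>\<phi>. B \<phi> = A \<phi>"
  moreover have "B = A" using calculation(2) by (rule ext)
  ultimately show ?thesis by simp
qed

lemma tricho:
  assumes "realnet A" "\<not> negligible U A"
  shows "PS A \<or> PS (\<lambda>\<phi>. - A \<phi>)"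
proof -
  obtain p where p: "ae U (\<lambda>\<phi>. Rad \<phi> ^ p \<le> cmod (A \<phi>))" using assms(2) by (rule not_negligible)
  have cm: "cmod (A \<phi>) = \<bar>Re (A \<phi>)\<bar>" for \<phi> using assms(1) unfolding realnet_def by (simp add: cmod_eq_Re)
  consider "ae U (\<lambda>\<phi>. 0 < Re (A \<phi>))" | "ae U (\<lambda>\<phi>. \<not> 0 < Re (A \<phi>))" using ae_cases by blast
  then show ?thesis
  proof cases
    case 1
    have "ae U (\<lambda>\<phi>. Rad \<phi> ^ p \<le> Re (A \<phi>))"
      by (rule ae_mono[OF ae_conj[OF p 1]]) (auto simp: cm abs_of_pos)
    then show ?thesis unfolding PS_def by blast
  next
    case 2
    have "ae U (\<lambda>\<phi>. Rad \<phi> ^ p \<le> Re (- A \<phi>))"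
      by (rule ae_mono[OF ae_conj[OF p 2]]) (auto simp: cm abs_if split: if_splits)
    then show ?thesis unfolding PS_def by blast
  qed
qed

lemma PS_opp: assumes "PS A" "PS B" "\<And>\<phi>. B \<phi> = - A \<phi>" shows False
proof -
  obtain p where p: "ae U (\<lambda>\<phi>. Rad \<phi> ^ p \<le> Re (A \<phi>))" using assms unfolding PS_def by blast
  obtain q where q: "ae U (\<lambda>\<phi>. Rad \<phi> ^ q \<le> Re (B \<phi>))" using assms unfolding PS_def by blast
  show False
  proof (rule ae_contr[OF ae_good_conj[OF ae_conj[OF p q]]])
    fix \<phi> assume h: "good \<phi> \<and> Rad \<phi> ^ p \<le> Re (A \<phi>) \<and> Rad \<phi> ^ q \<le> Re (B \<phi>)"
    then have "0 < Rad \<phi> ^ p" "0 < Rad \<phi> ^ q" unfolding good_def by auto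
    then show False using h assms(3)[of \<phi>] by simp
  qed
qed

lemma PS_add: assumes "PS A" "PS B" "\<And>\<phi>. C \<phi> = A \<phi> + B \<phi>" shows "PS C"
proof -
  obtain p where p: "ae U (\<lambda>\<phi>. Rad \<phi> ^ p \<le> Re (A \<phi>))" using assms unfolding PS_def by blast
  obtain q where q: "ae U (\<lambda>\<phi>. Rad \<phi> ^ q \<le> Re (B \<phi>))" using assms unfolding PS_def by blast
  have "ae U (\<lambda>\<phi>. Rad \<phi> ^ p \<le> Re (C \<phi>))"
  proof (rule ae_mono[OF ae_good_conj[OF ae_conj[OF p q]]])
    fix \<phi> assume h: "good \<phi> \<and> Rad \<phi> ^ p \<le> Re (A \<phi>) \<and> Rad \<phi> ^ q \<le> Re (B \<phi>)"
    then have "0 < Rad \<phi> ^ q" unfolding good_def by auto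
    then show "Rad \<phi> ^ p \<le> Re (C \<phi>)" using h assms(3)[of \<phi>] by simp
  qed
  then show ?thesis unfolding PS_def by blast
qed

lemma PS_mult: assumes "PS A" "PS B" "realnet A" "realnet B" "\<And>\<phi>. C \<phi> = A \<phi> * B \<phi>" shows "PS C"
proof -
  obtain p where p: "ae U (\<lambda>\<phi>. Rad \<phi> ^ p \<le> Re (A \<phi>))" using assms unfolding PS_def by blast
  obtain q where q: "ae U (\<lambda>\<phi>. Rad \<phi> ^ q \<le> Re (B \<phi>))" using assms unfolding PS_def by blast
  have "ae U (\<lambda>\<phi>. Rad \<phi> ^ (p + q) \<le> Re (C \<phi>))"
  proof (rule ae_mono[OF ae_good_conj[OF ae_conj[OF p q]]])
    fix \<phi> assume h: "good \<phi> \<and> Rad \<phi> ^ p \<le> Re (A \<phi>) \<and> Rad \<phi> ^ q \<le> Re (B \<phi>)"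
    then have "0 < Rad \<phi> ^ q" "0 < Rad \<phi> ^ p" unfolding good_def by auto
    then have "Rad \<phi> ^ p * Rad \<phi> ^ q \<le> Re (A \<phi>) * Re (B \<phi>)" using h by (intro mult_mono) auto
    moreover have "Re (C \<phi>) = Re (A \<phi>) * Re (B \<phi>)" using assms(3,4,5) unfolding realnet_def by simp
    ultimately show "Rad \<phi> ^ (p + q) \<le> Re (C \<phi>)" by (simp add: power_add)
  qed
  then show ?thesis unfolding PS_def by blast
qed

lemma gpos_cls:
  assumes "moderate U A" "realnet A"
  shows "gpos U (cls U A) \<longleftrightarrow> PS A"
proof
  assume g: "gpos U (cls U A)"
  then obtain A' where A': "A' \<in> cls U A" "\<forall>\<phi>. Im (A' \<phi>) = 0" "ae U (\<lambda>\<phi>. Re (A' \<phi>) > 0)"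
    unfolding gpos_def by blast
  have mA': "moderate U A'" and nA: "negligible U (\<lambda>\<phi>. A \<phi> - A' \<phi>)" using A'(1) unfolding mem_cls by auto
  have "cls U A' = cls U A" using cls_eq[OF mA' assms(1)] nA by (simp add: negligible_flip)
  moreover have "cls U A \<noteq> cls U (\<lambda>_. 0)" using g unfolding gpos_def by blast
  ultimately have "\<not> negligible U A'" using cls_zero_iff[OF mA'] by simp
  then obtain p where p: "ae U (\<lambda>\<phi>. Rad \<phi> ^ p \<le> cmod (A' \<phi>))" by (rule not_negligible)
  have "ae U (\<lambda>\<phi>. Rad \<phi> ^ p \<le> Re (A' \<phi>))"
    by (rule ae_mono[OF ae_conj[OF p A'(3)]]) (use A'(2) in \<open>auto simp: cmod_eq_Re abs_of_pos\<close>)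
  then have "PS A'" unfolding PS_def by blast
  then show "PS A" using PS_cong_neg negligible_flip[OF nA] by blast
next
  assume ps: "PS A"
  then obtain p where p: "ae U (\<lambda>\<phi>. Rad \<phi> ^ p \<le> Re (A \<phi>))" unfolding PS_def by blast
  have "ae U (\<lambda>\<phi>. Re (A \<phi>) > 0)"
  proof (rule ae_mono[OF ae_good_conj[OF p]])
    fix \<phi> assume h: "good \<phi> \<and> Rad \<phi> ^ p \<le> Re (A \<phi>)"
    then have "0 < Rad \<phi> ^ p" unfolding good_def by auto
    then show "Re (A \<phi>) > 0" using h by simp
  qed
  moreover have "cls U A \<noteq> cls U (\<lambda>_. 0)" using cls_zero_iff[OF assms(1)] PS_not_neg[OF ps] by simp
  ultimately show "gpos U (cls U A)" unfolding gpos_def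
    using Rhat_I[OF assms] self_cls[OF assms(1)] assms(2) unfolding realnet_def by blast
qed

lemma gle_cls:
  assumes "moderate U A" "realnet A" "moderate U B" "realnet B"
  shows "gle U (cls U A) (cls U B) \<longleftrightarrow> negligible U (\<lambda>\<phi>. B \<phi> - A \<phi>) \<or> PS (\<lambda>\<phi>. B \<phi> - A \<phi>)"
proof -
  have "cls U A = cls U B \<longleftrightarrow> negligible U (\<lambda>\<phi>. B \<phi> - A \<phi>)"
    using cls_eq[OF assms(1,3)] negligible_flip by blast
  moreover have "gless U (cls U A) (cls U B) \<longleftrightarrow> PS (\<lambda>\<phi>. B \<phi> - A \<phi>)"
    unfolding gless_def using assms by (simp add: RH_minus gpos_cls mods reals)
  ultimately show ?thesis unfolding gle_def by blast
qed

lemma NN_of_ae: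
  assumes "moderate U X" "realnet X" "ae U (\<lambda>\<phi>. 0 \<le> Re (X \<phi>))"
  shows "negligible U X \<or> PS X"
proof (rule ccontr)
  assume c: "\<not> (negligible U X \<or> PS X)"
  then have "PS (\<lambda>\<phi>. - X \<phi>)" using tricho[OF assms(2)] by blast
  then obtain p where p: "ae U (\<lambda>\<phi>. Rad \<phi> ^ p \<le> Re (- X \<phi>))" unfolding PS_def by blast
  show False
  proof (rule ae_contr[OF ae_good_conj[OF ae_conj[OF p assms(3)]]])
    fix \<phi> assume h: "good \<phi> \<and> Rad \<phi> ^ p \<le> Re (- X \<phi>) \<and> 0 \<le> Re (X \<phi>)"
    then have "0 < Rad \<phi> ^ p" unfolding good_def by auto
    then show False using h by simp
  qed
qed

lemma gle_of_ae:
  assumes "moderate U A" "realnet A" "moderate U B" "realnet B"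
    "ae U (\<lambda>\<phi>. Re (A \<phi>) \<le> Re (B \<phi>))"
  shows "gle U (cls U A) (cls U B)"
proof -
  have "ae U (\<lambda>\<phi>. 0 \<le> Re (B \<phi> - A \<phi>))" by (rule ae_mono[OF assms(5)]) simp
  then show ?thesis using NN_of_ae[of "\<lambda>\<phi>. B \<phi> - A \<phi>"] assms
    by (simp add: gle_cls mods reals)
qed

lemma TOF: "totally_ordered_field (RH U) (gle U)"
  unfolding totally_ordered_field_def
proof (intro conjI ballI impI)
  show "field (RH U)" by (rule RH_field)
next
  fix a assume "a \<in> carrier (RH U)" then show "gle U a a" unfolding gle_def by simp
next
  fix a b assume ab: "a \<in> carrier (RH U)" "b \<in> carrier (RH U)" "gle U a b \<and> gle U b a"
  then obtain A B where A: "moderate U A" "realnet A" "a = cls U A"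
    and B: "moderate U B" "realnet B" "b = cls U B" by (auto elim!: RhatE)
  show "a = b"
  proof (rule ccontr)
    assume ne: "a \<noteq> b"
    then have "PS (\<lambda>\<phi>. B \<phi> - A \<phi>)" "PS (\<lambda>\<phi>. A \<phi> - B \<phi>)"
      using ab(3) unfolding gle_def gless_def using A B by (auto simp: RH_minus gpos_cls mods reals)
    then show False by (rule PS_opp) simp
  qed
next
  fix a b c assume abc: "a \<in> carrier (RH U)" "b \<in> carrier (RH U)" "c \<in> carrier (RH U)"
    "gle U a b \<and> gle U b c"
  then obtain A B C where A: "moderate U A" "realnet A" "a = cls U A"
    and B: "moderate U B" "realnet B" "b = cls U B"
    and C: "moderate U C" "realnet C" "c = cls U C" by (auto elim!: RhatE)
  show "gle U a c"
  proof (cases "a = b \<or> b = c")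
    case True then show ?thesis using abc by auto
  next
    case False
    then have "PS (\<lambda>\<phi>. B \<phi> - A \<phi>)" "PS (\<lambda>\<phi>. C \<phi> - B \<phi>)"
      using abc(4) unfolding gle_def gless_def using A B C by (auto simp: RH_minus gpos_cls mods reals)
    then have "PS (\<lambda>\<phi>. C \<phi> - A \<phi>)" by (rule PS_add) simp
    then show ?thesis unfolding gle_def gless_def using A C by (auto simp: RH_minus gpos_cls mods reals)
  qed
next
  fix a b assume ab: "a \<in> carrier (RH U)" "b \<in> carrier (RH U)"
  then obtain A B where A: "moderate U A" "realnet A" "a = cls U A"
    and B: "moderate U B" "realnet B" "b = cls U B" by (auto elim!: RhatE)
  have "negligible U (\<lambda>\<phi>. B \<phi> - A \<phi>) \<or> PS (\<lambda>\<phi>. B \<phi> - A \<phi>) \<or> PS (\<lambda>\<phi>. - (B \<phi> - A \<phi>))"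
    using tricho[of "\<lambda>\<phi>. B \<phi> - A \<phi>"] A B by (auto intro: reals)
  moreover have "PS (\<lambda>\<phi>. A \<phi> - B \<phi>)" if "PS (\<lambda>\<phi>. - (B \<phi> - A \<phi>))"
    using that by (rule PS_fun) simp
  ultimately show "gle U a b \<or> gle U b a" using A B by (auto simp: gle_cls)
next
  fix a b c assume abc: "a \<in> carrier (RH U)" "b \<in> carrier (RH U)" "c \<in> carrier (RH U)" "gle U a b"
  then obtain A B C where A: "moderate U A" "realnet A" "a = cls U A"
    and B: "moderate U B" "realnet B" "b = cls U B"
    and C: "moderate U C" "realnet C" "c = cls U C" by (auto elim!: RhatE)
  have eq: "(\<lambda>\<phi>. (B \<phi> + C \<phi>) - (A \<phi> + C \<phi>)) = (\<lambda>\<phi>. B \<phi> - A \<phi>)" by auto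
  show "gle U (a \<oplus>\<^bsub>RH U\<^esub> c) (b \<oplus>\<^bsub>RH U\<^esub> c)"
    using abc(4) A B C by (simp add: gadd_cls gle_cls mods reals eq)
next
  fix a b assume ab: "a \<in> carrier (RH U)" "b \<in> carrier (RH U)"
    "gle U \<zero>\<^bsub>RH U\<^esub> a \<and> gle U \<zero>\<^bsub>RH U\<^esub> b"
  then obtain A B where A: "moderate U A" "realnet A" "a = cls U A"
    and B: "moderate U B" "realnet B" "b = cls U B" by (auto elim!: RhatE)
  have z: "moderate U (\<lambda>_. 0)" "realnet (\<lambda>_. 0)" by (auto intro: mods reals)
  have ha: "negligible U A \<or> PS A" and hb: "negligible U B \<or> PS B"
    using ab(3) A B z by (simp_all add: gle_cls)
  have "negligible U (\<lambda>\<phi>. A \<phi> * B \<phi>) \<or> PS (\<lambda>\<phi>. A \<phi> * B \<phi>)"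
    using ha hb A B by (auto intro: negligible_mult negligible_mult2 PS_mult)
  then show "gle U \<zero>\<^bsub>RH U\<^esub> (a \<otimes>\<^bsub>RH U\<^esub> b)"
    using A B z by (simp add: gmult_cls gle_cls mods reals)
qed

lemma sqrt_le_1_plus: "0 \<le> (t::real) \<Longrightarrow> sqrt t \<le> 1 + t"
proof -
  assume t: "0 \<le> t"
  have "t \<le> (1 + t)\<^sup>2" using t mult_nonneg_nonneg[OF t t] by (simp add: power2_eq_square algebra_simps)
  then have "sqrt t \<le> sqrt ((1 + t)\<^sup>2)" by (rule real_sqrt_le_mono)
  also have "\<dots> = 1 + t" using t by simp
  finally show ?thesis .
qed

lemma squares:
  assumes "a \<in> Rhat U"
  shows "gle U (cls U (\<lambda>_. 0)) a \<longleftrightarrow> (\<exists>b\<in>Rhat U. a = gmult U b b)"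
proof -
  obtain A where A: "moderate U A" "realnet A" "a = cls U A" using assms by (rule RhatE)
  have z: "moderate U (\<lambda>_. 0)" "realnet (\<lambda>_. 0)" by (auto intro: mods reals)
  have le: "gle U (cls U (\<lambda>_. 0)) a \<longleftrightarrow> negligible U A \<or> PS A"
    using A z by (simp add: gle_cls)
  show ?thesis
  proof
    assume "gle U (cls U (\<lambda>_. 0)) a"
    then have "negligible U A \<or> PS A" using le by simp
    then show "\<exists>b\<in>Rhat U. a = gmult U b b"
    proof
      assume "negligible U A"
      then have "a = cls U (\<lambda>_. 0)" using A cls_zero_iff by simp
      moreover have "gmult U (cls U (\<lambda>_. 0)) (cls U (\<lambda>_. 0)) = cls U (\<lambda>_. 0)"
        using z by (simp add: gmult_cls)
      ultimately show ?thesis using Rhat_I[OF z] by metis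
    next
      assume ps: "PS A"
      then obtain p where p: "ae U (\<lambda>\<phi>. Rad \<phi> ^ p \<le> Re (A \<phi>))" unfolding PS_def by blast
      define B where "B = (\<lambda>\<phi>. complex_of_real (sqrt \<bar>Re (A \<phi>)\<bar>))"
      have rB: "realnet B" unfolding B_def by (rule realnet_of_real)
      have mB: "moderate U B"
      proof (rule moderate_mono)
        show "moderate U (\<lambda>\<phi>. 1 + complex_of_real (cmod (A \<phi>)))"
          by (intro moderate_add moderate_const moderate_mono[OF A(1)]) (simp add: ae_True)
        show "ae U (\<lambda>\<phi>. cmod (B \<phi>) \<le> cmod (1 + complex_of_real (cmod (A \<phi>))))"
        proof (rule ae_mono[OF ae_True])
          fix \<phi>
          have "sqrt \<bar>Re (A \<phi>)\<bar> \<le> 1 + \<bar>Re (A \<phi>)\<bar>" by (rule sqrt_le_1_plus) simp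
          moreover have "\<bar>Re (A \<phi>)\<bar> \<le> cmod (A \<phi>)" by (rule abs_Re_le_cmod)
          moreover have "cmod (1 + complex_of_real (cmod (A \<phi>))) = 1 + cmod (A \<phi>)"
            by (metis norm_of_real_add1 abs_of_nonneg add.commute norm_ge_zero
                add_nonneg_nonneg zero_le_one of_real_add of_real_1)
          ultimately show "cmod (B \<phi>) \<le> cmod (1 + complex_of_real (cmod (A \<phi>)))"
            unfolding B_def by simp
        qed
      qed
      have "negligible U (\<lambda>\<phi>. A \<phi> - B \<phi> * B \<phi>)"
      proof (rule negligible_mono[OF negligible_zero])
        show "ae U (\<lambda>\<phi>. cmod (A \<phi> - B \<phi> * B \<phi>) \<le> cmod 0)"
        proof (rule ae_mono[OF ae_good_conj[OF p]])
          fix \<phi> assume h: "good \<phi> \<and> Rad \<phi> ^ p \<le> Re (A \<phi>)"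
          then have "0 < Rad \<phi> ^ p" unfolding good_def by auto
          then have pos: "0 < Re (A \<phi>)" using h by simp
          have "B \<phi> * B \<phi> = complex_of_real (Re (A \<phi>))" unfolding B_def
            using pos by (simp flip: of_real_mult)
          also have "\<dots> = A \<phi>" using A(2) unfolding realnet_def by (simp add: complex_eq_iff)
          finally show "cmod (A \<phi> - B \<phi> * B \<phi>) \<le> cmod 0" by simp
        qed
      qed
      then have "a = gmult U (cls U B) (cls U B)" using A mB by (simp add: gmult_cls cls_eq mods)
      then show ?thesis using Rhat_I[OF mB rB] by blast
    qed
  next
    assume "\<exists>b\<in>Rhat U. a = gmult U b b"
    then obtain b where b: "b \<in> Rhat U" "a = gmult U b b" by blast
    then obtain B where B: "moderate U B" "realnet B" "b = cls U B" by (auto elim!: RhatE)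
    have ab: "a = cls U (\<lambda>\<phi>. B \<phi> * B \<phi>)" using b B by (simp add: gmult_cls)
    have "negligible U (\<lambda>\<phi>. B \<phi> * B \<phi>) \<or> PS (\<lambda>\<phi>. B \<phi> * B \<phi>)"
    proof (cases "negligible U B")
      case True then show ?thesis using B by (auto intro: negligible_mult)
    next
      case False
      then obtain p where p: "ae U (\<lambda>\<phi>. Rad \<phi> ^ p \<le> cmod (B \<phi>))" by (rule not_negligible)
      have "ae U (\<lambda>\<phi>. Rad \<phi> ^ (p + p) \<le> Re (B \<phi> * B \<phi>))"
      proof (rule ae_mono[OF ae_good_conj[OF p]])
        fix \<phi> assume h: "good \<phi> \<and> Rad \<phi> ^ p \<le> cmod (B \<phi>)"
        then have "0 < Rad \<phi> ^ p" unfolding good_def by auto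
        then have "Rad \<phi> ^ p * Rad \<phi> ^ p \<le> cmod (B \<phi>) * cmod (B \<phi>)" using h by (intro mult_mono) auto
        moreover have "Re (B \<phi> * B \<phi>) = cmod (B \<phi>) * cmod (B \<phi>)"
          using B(2) unfolding realnet_def by (simp add: cmod_eq_Re abs_mult_self_eq)
        ultimately show "Rad \<phi> ^ (p + p) \<le> Re (B \<phi> * B \<phi>)" by (simp add: power_add)
      qed
      then show ?thesis unfolding PS_def by blast
    qed
    then show "gle U (cls U (\<lambda>_. 0)) a" using ab B z by (simp add: gle_cls mods reals)
  qed
qed

lemma sq_unique:
  assumes "moderate U X" "realnet X" "moderate U Y" "realnet Y"
    and hx: "negligible U X \<or> PS X" and hy: "negligible U Y \<or> PS Y"
    and n: "negligible U (\<lambda>\<phi>. X \<phi> * X \<phi> - Y \<phi> * Y \<phi>)"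
  shows "negligible U (\<lambda>\<phi>. X \<phi> - Y \<phi>)"
proof -
  have sq_cases: False if "negligible U X" "PS Y"
    "negligible U (\<lambda>\<phi>. X \<phi> * X \<phi> - Y \<phi> * Y \<phi>)" "moderate U X" "realnet Y" for X Y
  proof -
    have "negligible U (\<lambda>\<phi>. X \<phi> * X \<phi>)" using that by (intro negligible_mult)
    then have "negligible U (\<lambda>\<phi>. Y \<phi> * Y \<phi>)"
      by (rule negligible_cong[OF negligible_diff[OF _ that(3)]]) simp
    moreover have "PS (\<lambda>\<phi>. Y \<phi> * Y \<phi>)" by (rule PS_mult[OF that(2) that(2) that(5) that(5)]) simp
    ultimately show False using PS_not_neg by blast
  qed
  have n': "negligible U (\<lambda>\<phi>. Y \<phi> * Y \<phi> - X \<phi> * X \<phi>)" using n by (rule negligible_flip)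
  consider "negligible U X" "negligible U Y" | "negligible U X" "PS Y" | "PS X" "negligible U Y" | "PS X" "PS Y"
    using hx hy by blast
  then show ?thesis
  proof cases
    case 1 then show ?thesis by (rule negligible_diff)
  next
    case 2 then show ?thesis using sq_cases[OF 2(1) 2(2) n assms(1) assms(4)] by blast
  next
    case 3 then show ?thesis using sq_cases[OF 3(2) 3(1) n' assms(3) assms(2)] by blast
  next
    case 4
    obtain p where p: "ae U (\<lambda>\<phi>. Rad \<phi> ^ p \<le> Re (X \<phi>))" using 4 unfolding PS_def by blast
    obtain q where q: "ae U (\<lambda>\<phi>. Rad \<phi> ^ q \<le> Re (Y \<phi>))" using 4 unfolding PS_def by blast
    show ?thesis unfolding negligible_def
    proof
      fix k
      have nk: "ae U (\<lambda>\<phi>. cmod (X \<phi> * X \<phi> - Y \<phi> * Y \<phi>) < Rad \<phi> ^ (k + p))"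
        using n unfolding negligible_def by blast
      show "ae U (\<lambda>\<phi>. cmod (X \<phi> - Y \<phi>) < Rad \<phi> ^ k)"
      proof (rule ae_mono[OF ae_good_conj[OF ae_conj[OF ae_conj[OF p q] nk]]])
        fix \<phi> assume h: "good \<phi> \<and> (Rad \<phi> ^ p \<le> Re (X \<phi>) \<and> Rad \<phi> ^ q \<le> Re (Y \<phi>)) \<and>
            cmod (X \<phi> * X \<phi> - Y \<phi> * Y \<phi>) < Rad \<phi> ^ (k + p)"
        then have r: "0 < Rad \<phi>" unfolding good_def by auto
        then have rp: "0 < Rad \<phi> ^ p" "0 < Rad \<phi> ^ q" by auto
        have "Re (X \<phi> + Y \<phi>) \<le> cmod (X \<phi> + Y \<phi>)" by (rule complex_Re_le_cmod)
        then have s: "Rad \<phi> ^ p \<le> cmod (X \<phi> + Y \<phi>)" using h rp by simp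
        have "cmod (X \<phi> - Y \<phi>) * Rad \<phi> ^ p \<le> cmod (X \<phi> - Y \<phi>) * cmod (X \<phi> + Y \<phi>)"
          using s by (intro mult_left_mono) auto
        also have "\<dots> = cmod (X \<phi> * X \<phi> - Y \<phi> * Y \<phi>)"
          by (simp add: norm_mult[symmetric] algebra_simps)
        also have "\<dots> < Rad \<phi> ^ k * Rad \<phi> ^ p" using h by (simp add: power_add)
        finally show "cmod (X \<phi> - Y \<phi>) < Rad \<phi> ^ k" using rp by simp
      qed
    qed
  qed
qed

definition Mn :: "'n net \<Rightarrow> 'n net" where
  "Mn Z = (\<lambda>\<phi>. complex_of_real (cmod (Z \<phi>)))"

lemma Mn_mod: "moderate U Z \<Longrightarrow> moderate U (Mn Z)"
  unfolding Mn_def by (erule moderate_mono) (simp add: ae_True)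

lemma Mn_real: "realnet (Mn Z)"
  unfolding Mn_def by (rule realnet_of_real)

lemma gabs_cls:
  assumes mZ: "moderate U Z"
  shows "gabs U (cls U Z) = cls U (Mn Z)"
  unfolding gabs_def
proof (rule the_equality)
  have z: "moderate U (\<lambda>_. 0)" "realnet (\<lambda>_. 0)" by (auto intro: mods reals)
  have i: "moderate U (\<lambda>_. \<i>)" by (rule moderate_const)
  define RZ where "RZ = (\<lambda>\<phi>. complex_of_real (Re (Z \<phi>)))"
  define IZ where "IZ = (\<lambda>\<phi>. complex_of_real (Im (Z \<phi>)))"
  have mR: "moderate U RZ" unfolding RZ_def by (rule moderate_mono[OF mZ]) (simp add: ae_True abs_Re_le_cmod)
  have mI: "moderate U IZ" unfolding IZ_def by (rule moderate_mono[OF mZ]) (simp add: ae_True abs_Im_le_cmod)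
  have rR: "realnet RZ" "realnet IZ" unfolding RZ_def IZ_def by (auto intro: realnet_of_real)
  have e1: "(\<lambda>\<phi>. RZ \<phi> + \<i> * IZ \<phi>) = Z" unfolding RZ_def IZ_def by (auto simp: complex_eq_iff)
  have e2: "(\<lambda>\<phi>. Mn Z \<phi> * Mn Z \<phi>) = (\<lambda>\<phi>. RZ \<phi> * RZ \<phi> + IZ \<phi> * IZ \<phi>)"
    unfolding RZ_def IZ_def Mn_def
  proof (rule ext)
    fix \<phi>
    have "cmod (Z \<phi>) * cmod (Z \<phi>) = Re (Z \<phi>) * Re (Z \<phi>) + Im (Z \<phi>) * Im (Z \<phi>)"
      using cmod_power2[of "Z \<phi>"] by (simp add: power2_eq_square)
    then show "complex_of_real (cmod (Z \<phi>)) * complex_of_real (cmod (Z \<phi>)) =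
      complex_of_real (Re (Z \<phi>)) * complex_of_real (Re (Z \<phi>)) + complex_of_real (Im (Z \<phi>)) * complex_of_real (Im (Z \<phi>))"
      by (simp only: of_real_mult[symmetric] of_real_add[symmetric])
  qed
  have "ae U (\<lambda>\<phi>. 0 \<le> Re (Mn Z \<phi>))" unfolding Mn_def by (simp add: ae_True)
  then have nn: "negligible U (Mn Z) \<or> PS (Mn Z)" using NN_of_ae Mn_mod[OF mZ] Mn_real by blast
  show "cls U (Mn Z) \<in> Rhat U \<and> gle U (cls U (\<lambda>_. 0)) (cls U (Mn Z)) \<and>
      (\<exists>a\<in>Rhat U. \<exists>b\<in>Rhat U. cls U Z = gadd U a (gmult U (cls U (\<lambda>_. \<i>)) b) \<and>
          gmult U (cls U (Mn Z)) (cls U (Mn Z)) = gadd U (gmult U a a) (gmult U b b))"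
  proof -
    have f1: "cls U (Mn Z) \<in> Rhat U" using Mn_mod[OF mZ] Mn_real by (rule Rhat_I)
    have f2: "gle U (cls U (\<lambda>_. 0)) (cls U (Mn Z))" using nn z Mn_mod[OF mZ] Mn_real
      by (simp add: gle_cls)
    have f3: "cls U RZ \<in> Rhat U" "cls U IZ \<in> Rhat U" using mR mI rR by (auto intro: Rhat_I)
    have f4: "cls U Z = gadd U (cls U RZ) (gmult U (cls U (\<lambda>_. \<i>)) (cls U IZ))"
      using mR mI i by (simp add: gmult_cls gadd_cls mods e1)
    have f5: "gmult U (cls U (Mn Z)) (cls U (Mn Z)) = gadd U (gmult U (cls U RZ) (cls U RZ)) (gmult U (cls U IZ) (cls U IZ))"
      using mR mI Mn_mod[OF mZ] by (simp add: gmult_cls gadd_cls mods e2)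
    show ?thesis using f1 f2 f3 f4 f5 by blast
  qed
next
  fix c
  assume h: "c \<in> Rhat U \<and> gle U (cls U (\<lambda>_. 0)) c \<and>
      (\<exists>a\<in>Rhat U. \<exists>b\<in>Rhat U. cls U Z = gadd U a (gmult U (cls U (\<lambda>_. \<i>)) b) \<and>
          gmult U c c = gadd U (gmult U a a) (gmult U b b))"
  have z: "moderate U (\<lambda>_. 0)" "realnet (\<lambda>_. 0)" by (auto intro: mods reals)
  have i: "moderate U (\<lambda>_. \<i>)" by (rule moderate_const)
  obtain C where C: "moderate U C" "realnet C" "c = cls U C" using h by (auto elim!: RhatE)
  obtain a b where ab: "a \<in> Rhat U" "b \<in> Rhat U" "cls U Z = gadd U a (gmult U (cls U (\<lambda>_. \<i>)) b)"
    "gmult U c c = gadd U (gmult U a a) (gmult U b b)" using h by blast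
  obtain A where A: "moderate U A" "realnet A" "a = cls U A" using ab(1) by (rule RhatE)
  obtain B where B: "moderate U B" "realnet B" "b = cls U B" using ab(2) by (rule RhatE)
  define RZ where "RZ = (\<lambda>\<phi>. complex_of_real (Re (Z \<phi>)))"
  define IZ where "IZ = (\<lambda>\<phi>. complex_of_real (Im (Z \<phi>)))"
  have mR: "moderate U RZ" unfolding RZ_def by (rule moderate_mono[OF mZ]) (simp add: ae_True abs_Re_le_cmod)
  have mI: "moderate U IZ" unfolding IZ_def by (rule moderate_mono[OF mZ]) (simp add: ae_True abs_Im_le_cmod)
  have "cls U Z = cls U (\<lambda>\<phi>. A \<phi> + \<i> * B \<phi>)" using ab(3) A B i by (simp add: gmult_cls gadd_cls mods)
  then have nz: "negligible U (\<lambda>\<phi>. Z \<phi> - (A \<phi> + \<i> * B \<phi>))"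
    using mZ A B i by (simp add: cls_eq mods)
  have "negligible U (\<lambda>\<phi>. RZ \<phi> - A \<phi>)"
  proof (rule negligible_mono[OF nz])
    show "ae U (\<lambda>\<phi>. cmod (RZ \<phi> - A \<phi>) \<le> cmod (Z \<phi> - (A \<phi> + \<i> * B \<phi>)))"
    proof (rule ae_mono[OF ae_True])
      fix \<phi>
      have "cmod (RZ \<phi> - A \<phi>) = \<bar>Re (Z \<phi> - (A \<phi> + \<i> * B \<phi>))\<bar>"
        using A(2) B(2) unfolding RZ_def realnet_def by (simp add: cmod_eq_Re)
      then show "cmod (RZ \<phi> - A \<phi>) \<le> cmod (Z \<phi> - (A \<phi> + \<i> * B \<phi>))" by (rule ord_eq_le_trans[OF _ abs_Re_le_cmod])
    qed
  qed
  then have eA: "a = cls U RZ" using A mR by (simp add: cls_eq negligible_flip)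
  have "negligible U (\<lambda>\<phi>. IZ \<phi> - B \<phi>)"
  proof (rule negligible_mono[OF nz])
    show "ae U (\<lambda>\<phi>. cmod (IZ \<phi> - B \<phi>) \<le> cmod (Z \<phi> - (A \<phi> + \<i> * B \<phi>)))"
    proof (rule ae_mono[OF ae_True])
      fix \<phi>
      have "cmod (IZ \<phi> - B \<phi>) = \<bar>Im (Z \<phi> - (A \<phi> + \<i> * B \<phi>))\<bar>"
        using A(2) B(2) unfolding IZ_def realnet_def by (simp add: cmod_eq_Re)
      then show "cmod (IZ \<phi> - B \<phi>) \<le> cmod (Z \<phi> - (A \<phi> + \<i> * B \<phi>))" by (rule ord_eq_le_trans[OF _ abs_Im_le_cmod])
    qed
  qed
  then have eB: "b = cls U IZ" using B mI by (simp add: cls_eq negligible_flip)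
  have e2: "(\<lambda>\<phi>. Mn Z \<phi> * Mn Z \<phi>) = (\<lambda>\<phi>. RZ \<phi> * RZ \<phi> + IZ \<phi> * IZ \<phi>)"
    unfolding RZ_def IZ_def Mn_def
  proof (rule ext)
    fix \<phi>
    have "cmod (Z \<phi>) * cmod (Z \<phi>) = Re (Z \<phi>) * Re (Z \<phi>) + Im (Z \<phi>) * Im (Z \<phi>)"
      using cmod_power2[of "Z \<phi>"] by (simp add: power2_eq_square)
    then show "complex_of_real (cmod (Z \<phi>)) * complex_of_real (cmod (Z \<phi>)) =
      complex_of_real (Re (Z \<phi>)) * complex_of_real (Re (Z \<phi>)) + complex_of_real (Im (Z \<phi>)) * complex_of_real (Im (Z \<phi>))"
      by (simp only: of_real_mult[symmetric] of_real_add[symmetric])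
  qed
  have "cls U (\<lambda>\<phi>. C \<phi> * C \<phi>) = cls U (\<lambda>\<phi>. Mn Z \<phi> * Mn Z \<phi>)"
    using ab(4) C eA eB mR mI by (simp add: gmult_cls gadd_cls mods e2)
  then have nsq: "negligible U (\<lambda>\<phi>. C \<phi> * C \<phi> - Mn Z \<phi> * Mn Z \<phi>)"
    using C Mn_mod[OF mZ] by (simp add: cls_eq mods)
  have hc: "negligible U C \<or> PS C" using h C z by (simp add: gle_cls)
  have "ae U (\<lambda>\<phi>. 0 \<le> Re (Mn Z \<phi>))" unfolding Mn_def by (simp add: ae_True)
  then have nn: "negligible U (Mn Z) \<or> PS (Mn Z)" using NN_of_ae Mn_mod[OF mZ] Mn_real by blast
  have "negligible U (\<lambda>\<phi>. C \<phi> - Mn Z \<phi>)"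
    by (rule sq_unique[OF C(1,2) Mn_mod[OF mZ] Mn_real hc nn nsq])
  then show "c = cls U (Mn Z)" using C Mn_mod[OF mZ] by (simp add: cls_eq)
qed

lemma ABS: "is_absolute_value (CH U) (RH U) (gle U) (gabs U)"
  unfolding is_absolute_value_def
proof (intro conjI ballI)
  have z: "moderate U (\<lambda>_. 0)" "realnet (\<lambda>_. 0)" by (auto intro: mods reals)
  fix x assume "x \<in> carrier (CH U)"
  then obtain Z where Z: "moderate U Z" "x = cls U Z" by (auto elim!: ChatE)
  have "ae U (\<lambda>\<phi>. 0 \<le> Re (Mn Z \<phi>))" unfolding Mn_def by (simp add: ae_True)
  then have nn: "negligible U (Mn Z) \<or> PS (Mn Z)" using NN_of_ae Mn_mod[OF Z(1)] Mn_real by blast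
  show "gabs U x \<in> carrier (RH U)" using Z by (simp add: gabs_cls Rhat_I Mn_mod Mn_real)
  show "gle U \<zero>\<^bsub>RH U\<^esub> (gabs U x)" using Z nn z by (simp add: gabs_cls gle_cls Mn_mod Mn_real)
  have "negligible U (Mn Z) \<longleftrightarrow> negligible U Z"
  proof
    assume "negligible U (Mn Z)" then show "negligible U Z"
      by (rule negligible_mono) (simp add: Mn_def ae_True)
  next
    assume "negligible U Z" then show "negligible U (Mn Z)"
      by (rule negligible_mono) (simp add: Mn_def ae_True)
  qed
  then show "(gabs U x = \<zero>\<^bsub>RH U\<^esub>) = (x = \<zero>\<^bsub>CH U\<^esub>)"
    using Z by (simp add: gabs_cls cls_zero_iff Mn_mod)
next
  fix x y assume "x \<in> carrier (CH U)" "y \<in> carrier (CH U)"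
  then obtain Z W where Z: "moderate U Z" "x = cls U Z" and W: "moderate U W" "y = cls U W"
    by (auto elim!: ChatE)
  have e: "Mn (\<lambda>\<phi>. Z \<phi> * W \<phi>) = (\<lambda>\<phi>. Mn Z \<phi> * Mn W \<phi>)" unfolding Mn_def by (simp add: norm_mult)
  show "gabs U (x \<otimes>\<^bsub>CH U\<^esub> y) = gabs U x \<otimes>\<^bsub>RH U\<^esub> gabs U y"
    using Z W by (simp add: gmult_cls gabs_cls mods Mn_mod e)
next
  fix x y assume "x \<in> carrier (CH U)" "y \<in> carrier (CH U)"
  then obtain Z W where Z: "moderate U Z" "x = cls U Z" and W: "moderate U W" "y = cls U W"
    by (auto elim!: ChatE)
  have "gle U (cls U (Mn (\<lambda>\<phi>. Z \<phi> + W \<phi>))) (cls U (\<lambda>\<phi>. Mn Z \<phi> + Mn W \<phi>))"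
  proof (rule gle_of_ae)
    show "ae U (\<lambda>\<phi>. Re (Mn (\<lambda>\<phi>. Z \<phi> + W \<phi>) \<phi>) \<le> Re (Mn Z \<phi> + Mn W \<phi>))"
      unfolding Mn_def by (simp add: ae_True norm_triangle_ineq)
  qed (use Z W in \<open>auto intro: Mn_mod Mn_real mods reals realnet_add\<close>)
  then show "gle U (gabs U (x \<oplus>\<^bsub>CH U\<^esub> y)) (gabs U x \<oplus>\<^bsub>RH U\<^esub> gabs U y)"
    using Z W by (simp add: gadd_cls gabs_cls mods Mn_mod)
qed

lemma main:
  "totally_ordered_field (RH U) (gle U)
       \<and> (\<forall>a\<in>Rhat U. gle U (cls U (\<lambda>_. 0)) a \<longleftrightarrow> (\<exists>b\<in>Rhat U. a = gmult U b b))
       \<and> is_absolute_value (CH U) (RH U) (gle U) (gabs U)"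
  using TOF squares ABS by blast

end

theorem corollary4p3:
  fixes U :: "('n::finite) test set set"
  assumes "free_ultrafilter_on D0 U"
    and "\<And>n. n \<ge> 1 \<Longrightarrow> Dn n \<in> U"
    and "cplus_good U"
  shows "totally_ordered_field (RH U) (gle U)
       \<and> (\<forall>a\<in>Rhat U. gle U (cls U (\<lambda>_. 0)) a \<longleftrightarrow> (\<exists>b\<in>Rhat U. a = gmult U b b))
       \<and> is_absolute_value (CH U) (RH U) (gle U) (gabs U)"
proof -
  have uf: "ultrafilter_on D0 U" using assms(1) unfolding free_ultrafilter_on_def by blast
  interpret GC U using uf assms(2) by unfold_locales
  show ?thesis by (rule main)
qed

end
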